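(* Let $\alpha=(\alpha_1,\dots,\alpha_k)$ be a composition of $r$ and let $m\ge k$. Then in $\mathcal{K}_+$, $$F_\alpha(u_1,u_2-u_1,\dots,u_m-u_{m-1})=\frac{q^{\mathrm{n}(\alpha)}}{[r]_q!}\,u_{[1+m-k,\,r+m-k]},$$ where $\mathrm{n}(\alpha)=\sum_{i=1}^k(i-1)\alpha_i$.
   Context: Let $\mathbf{k}$ be a field of characteristic zero and $q\in\mathbf{k}$ not a nontrivial root of unity; $[r]_q!=\prod_{i=1}^r(1+\dots+q^{i-1})$. The Klyachko algebra $\mathcal{K}$ is the commutative $\mathbf{k}$-algebra generated by $u_i$, $i\in\mathbb{Z}$, with relations $(q+1)u_i^2=qu_iu_{i-1}+u_iu_{i+1}$; $\mathcal{K}_+$ is its quotient by the ideal generated by the $u_i$, $i\le0$. $u_{[a,b]}=u_au_{a+1}\cdots u_b$. For a composition $\alpha$ of $r$ with $\mathrm{Set}(\alpha)=\{\alpha_1,\alpha_1+\alpha_2,\dots,\alpha_1+\dots+\alpha_{k-1}\}$, the fundamental quasisymmetric polynomial is $F_\alpha(x_1,\dots,x_m)=\sum x_{i_1}\cdots x_{i_r}$ over $1\le i_1\le\dots\le i_r\le m$ with $i_j<i_{j+1}$ whenever $j\in\mathrm{Set}(\alpha)$. *)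

theory Defs
  imports Main
begin

definition is_composition :: "nat list \<Rightarrow> nat \<Rightarrow> bool" where
  "is_composition \<alpha> r \<longleftrightarrow> (\<forall>a\<in>set \<alpha>. 0 < a) \<and> sum_list \<alpha> = r"

definition comp_set :: "nat list \<Rightarrow> nat set" where
  "comp_set \<alpha> = {sum_list (take j \<alpha>) | j. 1 \<le> j \<and> j < length \<alpha>}"

text \<open>Fundamental quasisymmetric polynomial F_alpha evaluated at x_1,...,x_m.
  Index sequences i_1..i_r are encoded as functions on {1..r}, zero elsewhere.\<close>
definition fundQSym :: "nat list \<Rightarrow> nat \<Rightarrow> (nat \<Rightarrow> 'a::comm_ring_1) \<Rightarrow> 'a" where
  "fundQSym \<alpha> m x =
     (let r = sum_list \<alpha> in
      \<Sum>f\<in>{f. (\<forall>j\<in>{1..r}. 1 \<le> f j \<and> f j \<le> m) \<and> (\<forall>j. j \<notin> {1..r} \<longrightarrow> f j = 0)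
              \<and> (\<forall>j\<in>{1..<r}. f j \<le> f (Suc j) \<and> (j \<in> comp_set \<alpha> \<longrightarrow> f j < f (Suc j)))}.
        \<Prod>j=1..r. x (f j))"

definition qfact :: "'k::field \<Rightarrow> nat \<Rightarrow> 'k" where
  "qfact q r = (\<Prod>i=1..r. \<Sum>j<i. q ^ j)"

definition comp_n :: "nat list \<Rightarrow> nat" where
  "comp_n \<alpha> = (\<Sum>i<length \<alpha>. i * \<alpha> ! i)"

definition u_interval :: "(int \<Rightarrow> 'a::comm_ring_1) \<Rightarrow> int \<Rightarrow> int \<Rightarrow> 'a" where
  "u_interval u a b = (\<Prod>i\<in>{a..b}. u i)"

end

theory Submission imports Defs begin


definition Aset :: "nat set \<Rightarrow> nat \<Rightarrow> nat \<Rightarrow> (nat \<Rightarrow> nat) set" where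
 "Aset S r m = {f. (\<forall>j\<in>{1..r}. 1 \<le> f j \<and> f j \<le> m) \<and> (\<forall>j. j \<notin> {1..r} \<longrightarrow> f j = 0)
              \<and> (\<forall>j\<in>{1..<r}. f j \<le> f (Suc j) \<and> (j \<in> S \<longrightarrow> f j < f (Suc j)))}"

definition Fs :: "nat set \<Rightarrow> nat \<Rightarrow> nat \<Rightarrow> (nat \<Rightarrow> 'a::comm_ring_1) \<Rightarrow> 'a" where
 "Fs S r m x = (\<Sum>f\<in>Aset S r m. \<Prod>j=1..r. x (f j))"

lemma fund_Fs: "fundQSym \<alpha> m x = Fs (comp_set \<alpha>) (sum_list \<alpha>) m x"
  by (simp add: fundQSym_def Fs_def Aset_def Let_def)

lemma Aset_0: "Aset S 0 m = {\<lambda>j. 0}"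
  unfolding Aset_def by (auto intro!: ext)

lemma Fs_0: "Fs S 0 m x = 1" by (simp add: Fs_def Aset_0)

lemma chain:
  fixes f :: "nat \<Rightarrow> nat"
  assumes "\<forall>j\<in>{1..<r}. f j \<le> f (Suc j)" "1 \<le> i" "i \<le> j" "j \<le> r"
  shows "f i \<le> f j"
  using assms(3,4)
proof (induction j)
  case 0 then show ?case by simp
next
  case (Suc j)
  show ?case
  proof (cases "i = Suc j")
    case True then show ?thesis by simp
  next
    case False
    then have ij: "i \<le> j" using Suc by simp
    with Suc have "f i \<le> f j" by simp
    moreover have "f j \<le> f (Suc j)" using assms(1) Suc.prems ij assms(2) by auto
    ultimately show ?thesis by simp
  qed
qed

lemma Aset_Suc: "Aset S (Suc n) m = (\<lambda>(p,g). g(Suc n := p)) ` (SIGMA p:{1..m}. Aset S n (if n \<in> S then p - 1 else p))"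
  (is "?L = ?R")
proof
  show "?L \<subseteq> ?R"
  proof
    fix f assume f: "f \<in> ?L"
    have h1: "\<forall>j\<in>{1..Suc n}. 1 \<le> f j \<and> f j \<le> m" and h2: "\<forall>j. j \<notin> {1..Suc n} \<longrightarrow> f j = 0"
      and h3: "\<forall>j\<in>{1..<Suc n}. f j \<le> f (Suc j) \<and> (j \<in> S \<longrightarrow> f j < f (Suc j))"
      using f unfolding Aset_def by auto
    define p where "p = f (Suc n)"
    define g where "g = f(Suc n := 0)"
    have p: "p \<in> {1..m}" using h1 p_def by auto
    have ch: "\<forall>j\<in>{1..<Suc n}. f j \<le> f (Suc j)" using h3 by auto
    have "g \<in> Aset S n (if n \<in> S then p - 1 else p)"
      unfolding Aset_def
    proof (intro CollectI conjI allI ballI impI)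
      fix j assume j: "j \<in> {1..n}"
      show "1 \<le> g j" using h1 j g_def by auto
      have "f j \<le> f n" using chain[OF ch, of j n] j by auto
      moreover have "f n \<le> p \<and> (n \<in> S \<longrightarrow> f n < p)" using h3 j p_def by auto
      ultimately show "g j \<le> (if n \<in> S then p - 1 else p)" using j g_def by auto
    next
      fix j assume "j \<notin> {1..n}" then show "g j = 0" using h2 g_def by auto
    next
      fix j assume "j \<in> {1..<n}" then show "g j \<le> g (Suc j)" using h3 g_def by auto
    next
      fix j assume "j \<in> {1..<n}" "j \<in> S" then show "g j < g (Suc j)" using h3 g_def by auto
    qed
    moreover have "f = g(Suc n := p)" using g_def p_def by auto
    ultimately show "f \<in> ?R" using p by force
  qed
next
  show "?R \<subseteq> ?L"
  proof
    fix f assume "f \<in> ?R"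
    then obtain p g where p: "p \<in> {1..m}" and g: "g \<in> Aset S n (if n \<in> S then p - 1 else p)"
      and f: "f = g(Suc n := p)" by auto
    have g1: "\<forall>j\<in>{1..n}. 1 \<le> g j \<and> g j \<le> (if n \<in> S then p - 1 else p)" and g2: "\<forall>j. j \<notin> {1..n} \<longrightarrow> g j = 0"
      and g3: "\<forall>j\<in>{1..<n}. g j \<le> g (Suc j) \<and> (j \<in> S \<longrightarrow> g j < g (Suc j))"
      using g unfolding Aset_def by auto
    show "f \<in> ?L" unfolding Aset_def
    proof (intro CollectI conjI allI ballI impI)
      fix j assume j: "j \<in> {1..Suc n}"
      show "1 \<le> f j" using j g1 p f by (cases "j = Suc n") auto
      show "f j \<le> m"
      proof (cases "j = Suc n")
        case True then show ?thesis using p f by auto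
      next
        case False
        then have "j \<in> {1..n}" using j by auto
        then have "g j \<le> (if n \<in> S then p - 1 else p)" using g1 by blast
        then have "g j \<le> p" by (auto split: if_splits)
        then show ?thesis using p f False by auto
      qed
    next
      fix j assume "j \<notin> {1..Suc n}" then show "f j = 0" using g2 f by auto
    next
      fix j assume j: "j \<in> {1..<Suc n}"
      show "f j \<le> f (Suc j)"
      proof (cases "j = n")
        case True
        then have "n \<in> {1..n}" using j by auto
        then have "g n \<le> (if n \<in> S then p - 1 else p)" using g1 by blast
        then show ?thesis using True p f  by (auto split: if_splits)
      next
        case False then show ?thesis using g3 j f by auto
      qed
    next
      fix j assume j: "j \<in> {1..<Suc n}" and jS: "j \<in> S"
      show "f j < f (Suc j)"
      proof (cases "j = n")
        case True
        then have "n \<in> {1..n}" using j by auto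
        then have "g n \<le> (if n \<in> S then p - 1 else p)" using g1 by blast
        then show ?thesis using True p f jS by (auto split: if_splits)
      next
        case False then show ?thesis using g3 j jS f by auto
      qed
    qed
  qed
qed

lemma Aset_inj: "inj_on (\<lambda>(p,g). g(Suc n := p)) (SIGMA p:{1..m}. Aset S n (if n \<in> S then p - 1 else p))"
proof (rule inj_onI, clarsimp)
  fix p g p' g'
  assume g: "g \<in> Aset S n (if n \<in> S then p - 1 else p)" and g': "g' \<in> Aset S n (if n \<in> S then p' - 1 else p')"
    and e: "g(Suc n := p) = g'(Suc n := p')"
  have "g (Suc n) = 0" "g' (Suc n) = 0" using g g' unfolding Aset_def by auto
  have pp: "p = p'" using fun_cong[OF e, of "Suc n"] by simp
  have "g = g'"
  proof
    fix j show "g j = g' j"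
      using fun_cong[OF e, of j] \<open>g (Suc n) = 0\<close> \<open>g' (Suc n) = 0\<close> by (cases "j = Suc n") auto
  qed
  then show "p = p' \<and> g = g'" using pp by simp
qed

lemma finite_Aset: "finite (Aset S n m)"
proof (induction n arbitrary: m)
  case 0 then show ?case by (simp add: Aset_0)
next
  case (Suc n) then show ?case unfolding Aset_Suc by (intro finite_imageI finite_SigmaI) auto
qed

lemma Fs_Suc: "Fs S (Suc n) m x = (\<Sum>p\<in>{1..m}. Fs S n (if n \<in> S then p - 1 else p) x * x p)"
proof -
  have "Fs S (Suc n) m x = (\<Sum>(p,g)\<in>(SIGMA p:{1..m}. Aset S n (if n \<in> S then p - 1 else p)).
          \<Prod>j=1..Suc n. x ((g(Suc n := p)) j))"
    unfolding Fs_def Aset_Suc by (subst sum.reindex[OF Aset_inj]) (simp add: comp_def case_prod_unfold)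
  also have "\<dots> = (\<Sum>p\<in>{1..m}. \<Sum>g\<in>Aset S n (if n \<in> S then p - 1 else p).
          \<Prod>j=1..Suc n. x ((g(Suc n := p)) j))"
    by (rule sum.Sigma[symmetric]) (auto simp: finite_Aset)
  also have "\<dots> = (\<Sum>p\<in>{1..m}. \<Sum>g\<in>Aset S n (if n \<in> S then p - 1 else p).
          (\<Prod>j=1..n. x (g j)) * x p)"
  proof (intro sum.cong refl)
    fix p g
    have "(\<Prod>j=1..Suc n. x ((g(Suc n := p)) j)) = (\<Prod>j=1..n. x ((g(Suc n := p)) j)) * x p"
      by simp
    also have "(\<Prod>j=1..n. x ((g(Suc n := p)) j)) = (\<Prod>j=1..n. x (g j))"
      by (intro prod.cong) auto
    finally show "(\<Prod>j=1..Suc n. x ((g(Suc n := p)) j)) = (\<Prod>j=1..n. x (g j)) * x p" .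
  qed
  also have "\<dots> = (\<Sum>p\<in>{1..m}. Fs S n (if n \<in> S then p - 1 else p) x * x p)"
    unfolding Fs_def by (simp add: sum_distrib_right)
  finally show ?thesis .
qed

lemma Aset_cong: "(\<And>j. j \<in> {1..<n} \<Longrightarrow> j \<in> S \<longleftrightarrow> j \<in> S') \<Longrightarrow> Aset S n m = Aset S' n m"
  unfolding Aset_def by blast

lemma Fs_cong: "(\<And>j. j \<in> {1..<n} \<Longrightarrow> j \<in> S \<longleftrightarrow> j \<in> S') \<Longrightarrow> Fs S n m x = Fs S' n m x"
  unfolding Fs_def using Aset_cong by metis

lemma comp_set_snoc: "comp_set (xs @ [a]) = {sum_list (take j xs) | j. 1 \<le> j \<and> j \<le> length xs}"
  unfolding comp_set_def
proof (rule Collect_cong, rule ex_cong1)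
  fix y j
  show "(y = sum_list (take j (xs @ [a])) \<and> 1 \<le> j \<and> j < length (xs @ [a])) =
        (y = sum_list (take j xs) \<and> 1 \<le> j \<and> j \<le> length xs)"
    by (cases "j \<le> length xs") auto
qed

lemma sum_take_le: "sum_list (take j xs) \<le> sum_list (xs::nat list)"
proof -
  have "sum_list xs = sum_list (take j xs) + sum_list (drop j xs)"
    by (metis append_take_drop_id sum_list_append)
  then show ?thesis by simp
qed

lemma not_in_comp_set: "2 \<le> a \<Longrightarrow> sum_list xs + a - 1 \<notin> comp_set (xs @ [a])"
proof
  assume a: "2 \<le> a" and "sum_list xs + a - 1 \<in> comp_set (xs @ [a])"
  then obtain j where "sum_list xs + a - 1 = sum_list (take j xs)" unfolding comp_set_snoc by auto
  moreover have "sum_list (take j xs) \<le> sum_list xs" by (rule sum_take_le)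
  ultimately show False using a by linarith
qed

lemma in_comp_set: "xs \<noteq> [] \<Longrightarrow> sum_list xs \<in> comp_set (xs @ [a])"
  unfolding comp_set_snoc by (rule CollectI, rule exI[of _ "length xs"]) (auto simp: Suc_le_eq)

lemma comp_set_snoc_lt: "j < sum_list xs \<Longrightarrow> j \<in> comp_set (xs @ [a]) \<longleftrightarrow> j \<in> comp_set xs"
proof
  assume "j < sum_list xs" "j \<in> comp_set (xs @ [a])"
  then obtain i where i: "j = sum_list (take i xs)" "1 \<le> i" "i \<le> length xs" unfolding comp_set_snoc by auto
  have "i \<noteq> length xs" using i \<open>j < sum_list xs\<close> by auto
  then show "j \<in> comp_set xs" unfolding comp_set_def using i by auto
next
  assume "j \<in> comp_set xs"
  then obtain i where i: "j = sum_list (take i xs)" "1 \<le> i" "i < length xs" unfolding comp_set_def by auto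
  then show "j \<in> comp_set (xs @ [a])" unfolding comp_set_snoc by auto
qed

lemma comp_n_snoc: "comp_n (xs @ [a]) = comp_n xs + length xs * a"
  unfolding comp_n_def by (simp add: nth_append)

lemma length_le_sum: "\<forall>x\<in>set xs. 0 < x \<Longrightarrow> length xs \<le> sum_list (xs::nat list)"
  by (induction xs) (auto simp: Suc_le_eq)



locale kly =
  fixes q :: "'k::field_char_0" and \<phi> :: "'k \<Rightarrow> 'a::comm_ring_1" and u :: "int \<Rightarrow> 'a"
  assumes q_not_root: "\<forall>n::nat. 1 \<le> n \<and> q ^ n = 1 \<longrightarrow> q = 1"
    and hom1: "\<phi> 1 = 1"
    and hom_add: "\<forall>a b. \<phi> (a + b) = \<phi> a + \<phi> b"
    and hom_mult: "\<forall>a b. \<phi> (a * b) = \<phi> a * \<phi> b"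
    and klyachko: "\<forall>i. \<phi> (q + 1) * u i ^ 2 = \<phi> q * u i * u (i - 1) + u i * u (i + 1)"
    and plus: "\<forall>i\<le>0. u i = 0"
begin

abbreviation "Q \<equiv> \<phi> q"
abbreviation "U \<equiv> u_interval u"

lemma hom0: "\<phi> 0 = 0" using hom_add[rule_format, of 0 0] by simp
lemma hom_pow: "\<phi> (a ^ n) = \<phi> a ^ n" by (induction n) (simp_all add: hom1 hom_mult)
lemma hom_sum: "\<phi> (\<Sum>j<(n::nat). f j) = (\<Sum>j<n. \<phi> (f j))" by (induction n) (simp_all add: hom0 hom_add)

lemma qint_nz: assumes "1 \<le> n" shows "(\<Sum>j<n. q ^ j) \<noteq> 0"
proof
  assume h: "(\<Sum>j<n. q ^ j) = 0"
  have "1 - q ^ n = (1 - q) * (\<Sum>j<n. q ^ j)" by (rule one_diff_power_eq)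
  then have "q ^ n = 1" using h by simp
  then have "q = 1" using q_not_root assms by blast
  then have "(\<Sum>j<n. q ^ j) = of_nat n" by simp
  then show False using h assms by simp
qed

lemma hom_div_cancel: "c \<noteq> 0 \<Longrightarrow> \<phi> (a / c) * \<phi> c = \<phi> a"
  using hom_mult[rule_format, of "a / c" c] by simp

lemma rel: "u i * (u (i + 1) - u i) = Q * (u i * (u i - u (i - 1)))"
proof -
  have "\<phi> (q + 1) = Q + 1" using hom_add hom1 by simp
  then have h: "(Q + 1) * u i ^ 2 = Q * u i * u (i - 1) + u i * u (i + 1)"
    using klyachko[rule_format, of i] by simp
  have "u i * (u (i + 1) - u i) - Q * (u i * (u i - u (i - 1)))
      = (Q * u i * u (i - 1) + u i * u (i + 1)) - (Q + 1) * u i ^ 2"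
    by (simp add: algebra_simps power2_eq_square)
  then show ?thesis using h by simp
qed

lemma U_split_in: "a \<le> i \<Longrightarrow> i \<le> b \<Longrightarrow> U a b = u i * prod u ({a..b} - {i})"
  unfolding u_interval_def by (rule prod.remove) auto

lemma U_right: "a \<le> b + 1 \<Longrightarrow> U a (b + 1) = U a b * u (b + 1)"
proof -
  assume "a \<le> b + 1"
  then have "{a..b + 1} = insert (b + 1) {a..b}" by auto
  then show ?thesis unfolding u_interval_def by (simp add: mult.commute)
qed

lemma U_left: "a \<le> b + 1 \<Longrightarrow> U (a - 1) b = u (a - 1) * U a b"
proof -
  assume "a \<le> b + 1"
  then have "{a - 1..b} = insert (a - 1) {a..b}" by auto
  then show ?thesis unfolding u_interval_def by simp
qed

lemma U_zero: "a \<le> 0 \<Longrightarrow> 0 \<le> b \<Longrightarrow> U a b = 0"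
  unfolding u_interval_def using plus by (intro prod_zero) auto

lemma local_id:
  fixes a :: int and s d :: nat
  assumes ds: "d \<le> s"
  shows "(\<Sum>j<Suc s. Q ^ j) * (U a (a + int s - 1) * (u (a + int d) - u (a + int d - 1)))
        = Q ^ d * (U a (a + int s) - U (a - 1) (a + int s - 1))"
proof -
  define P where "P = U a (a + int s - 1)"
  define D where "D j = P * (u (a + int j) - u (a + int j - 1))" for j :: nat
  have step: "D (Suc j) = Q * D j" if "j < s" for j
  proof -
    define i where "i = a + int j"
    have ai: "a \<le> i" "i \<le> a + int s - 1" using that i_def by auto
    define R where "R = prod u ({a..a + int s - 1} - {i})"
    have PR: "P = u i * R" unfolding P_def R_def using U_split_in[OF ai] .
    have i1: "a + int (Suc j) = i + 1" "a + int (Suc j) - 1 = i" "a + int j = i" "a + int j - 1 = i - 1"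
      unfolding i_def by simp_all
    have ii: "1 + i - 1 = i" "i + 1 - 1 = i" by simp_all
    have "D (Suc j) = R * (u i * (u (i + 1) - u i))"
      unfolding D_def i1 PR by (simp only: ac_simps ii)
    also have "\<dots> = R * (Q * (u i * (u i - u (i - 1))))" by (simp only: rel)
    also have "\<dots> = Q * D j" unfolding D_def i1 PR by (simp only: ac_simps)
    finally show ?thesis .
  qed
  have pw: "D j = Q ^ j * D 0" if "j \<le> s" for j
    using that
  proof (induction j)
    case 0 then show ?case by simp
  next
    case (Suc j)
    then have "D (Suc j) = Q * (Q ^ j * D 0)" using step[of j] by simp
    then show ?case by (simp only: power_Suc mult.assoc)
  qed
  have tel: "(\<Sum>j<Suc t. u (a + int j) - u (a + int j - 1)) = u (a + int t) - u (a - 1)" for t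
  proof (induction t)
    case 0 then show ?case by simp
  next
    case (Suc t)
    have "(\<Sum>j<Suc (Suc t). u (a + int j) - u (a + int j - 1))
        = (u (a + int t) - u (a - 1)) + (u (a + int (Suc t)) - u (a + int (Suc t) - 1))"
      by (simp only: sum.lessThan_Suc[of _ "Suc t"] Suc.IH)
    also have "a + int (Suc t) - 1 = a + int t" by simp
    finally show ?case by simp
  qed
  have sumD: "(\<Sum>j<Suc s. D j) = P * (u (a + int s) - u (a - 1))"
    unfolding D_def by (simp only: sum_distrib_left[symmetric] tel)
  have R1: "U a (a + int s) = P * u (a + int s)"
    unfolding P_def using U_right[of a "a + int s - 1"] by simp
  have L1: "U (a - 1) (a + int s - 1) = u (a - 1) * P"
    unfolding P_def using U_left[of a "a + int s - 1"] by simp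
  have "(\<Sum>j<Suc s. Q ^ j) * D d = Q ^ d * ((\<Sum>j<Suc s. Q ^ j) * D 0)"
    by (simp only: pw[OF ds] ac_simps)
  also have "(\<Sum>j<Suc s. Q ^ j) * D 0 = (\<Sum>j<Suc s. Q ^ j * D 0)"
    by (rule sum_distrib_right)
  also have "\<dots> = (\<Sum>j<Suc s. D j)"
  proof (rule sum.cong[OF refl])
    fix j assume "j \<in> {..<Suc s}"
    then show "Q ^ j * D 0 = D j" by (intro pw[symmetric]) simp
  qed
  also have "\<dots> = U a (a + int s) - U (a - 1) (a + int s - 1)"
    unfolding sumD R1 L1 by (simp only: right_diff_distrib ac_simps)
  finally show ?thesis unfolding D_def P_def .
qed

lemma local_id2:
  fixes a :: int and s d :: nat
  assumes ds: "d \<le> s"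
  shows "U a (a + int s - 1) * (u (a + int d) - u (a + int d - 1))
        = \<phi> (q ^ d / (\<Sum>j<Suc s. q ^ j)) * (U a (a + int s) - U (a - 1) (a + int s - 1))"
proof -
  define c where "c = (\<Sum>j<Suc s. q ^ j)"
  have cnz: "c \<noteq> 0" unfolding c_def by (rule qint_nz) simp
  have phic: "\<phi> c = (\<Sum>j<Suc s. Q ^ j)" unfolding c_def hom_sum hom_pow ..
  define X where "X = U a (a + int s - 1) * (u (a + int d) - u (a + int d - 1))"
  have "X = \<phi> (1 / c) * (\<phi> c * X)" using hom_div_cancel[OF cnz, of 1] hom1 by (simp add: mult.assoc[symmetric])
  also have "\<phi> c * X = Q ^ d * (U a (a + int s) - U (a - 1) (a + int s - 1))"
    unfolding phic X_def by (rule local_id[OF ds])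
  also have "\<phi> (1 / c) * (Q ^ d * (U a (a + int s) - U (a - 1) (a + int s - 1)))
     = \<phi> (q ^ d / c) * (U a (a + int s) - U (a - 1) (a + int s - 1))"
    using hom_mult[rule_format, of "q ^ d" "1 / c"] hom_pow by (simp add: algebra_simps)
  finally show ?thesis unfolding X_def c_def by (simp add: mult.assoc)
qed

definition X :: "nat \<Rightarrow> 'a" where "X j = (if j = 1 then u 1 else u (int j) - u (int j - 1))"

lemma X_eq: "1 \<le> p \<Longrightarrow> X p = u (int p) - u (int p - 1)"
  unfolding X_def using plus by auto

lemma sum_lemma:
  fixes s d :: nat
  assumes ds: "d \<le> s"
  shows "(\<Sum>p\<in>{1..m}. U (int p - int d) (int p - int d + int s - 1) * X p)
        = \<phi> (q ^ d / (\<Sum>j<Suc s. q ^ j)) * U (int m - int d) (int m - int d + int s)"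
proof (induction m)
  case 0
  have "U (0 - int d) (0 - int d + int s) = 0" using ds by (intro U_zero) auto
  then show ?case by simp
next
  case (Suc m)
  define a where "a = int (Suc m) - int d"
  define W where "W = \<phi> (q ^ d / (\<Sum>j<Suc s. q ^ j))"
  have e1: "X (Suc m) = u (a + int d) - u (a + int d - 1)" using X_eq[of "Suc m"] by (simp add: a_def)
  have e2: "U (a - 1) (a + int s - 1) = U (int m - int d) (int m - int d + int s)"
    by (simp add: a_def algebra_simps)
  have e3: "U (int (Suc m) - int d) (int (Suc m) - int d + int s - 1) = U a (a + int s - 1)"
    by (simp add: a_def)
  have e4: "U (int (Suc m) - int d) (int (Suc m) - int d + int s) = U a (a + int s)"
    by (simp add: a_def)
  have t: "U a (a + int s - 1) * X (Suc m) = W * (U a (a + int s) - U (int m - int d) (int m - int d + int s))"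
    unfolding e1 W_def e2[symmetric] by (rule local_id2[OF ds])
  have "(\<Sum>p\<in>{1..Suc m}. U (int p - int d) (int p - int d + int s - 1) * X p)
     = (\<Sum>p\<in>{1..m}. U (int p - int d) (int p - int d + int s - 1) * X p)
       + U (int (Suc m) - int d) (int (Suc m) - int d + int s - 1) * X (Suc m)" by simp
  also have "\<dots> = W * U (int m - int d) (int m - int d + int s) + W * (U a (a + int s) - U (int m - int d) (int m - int d + int s))"
    unfolding Suc.IH e3 t W_def ..
  also have "\<dots> = W * U a (a + int s)" by (simp add: algebra_simps)
  finally show ?case unfolding e4 W_def .
qed

lemma comp_nil: "is_composition \<alpha> 0 \<Longrightarrow> \<alpha> = []"
  unfolding is_composition_def by (cases \<alpha>) auto

lemma qfact_Suc: "qfact q (Suc n) = qfact q n * (\<Sum>j<Suc n. q ^ j)"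
  unfolding qfact_def by simp

lemma main:
  "is_composition \<alpha> r \<Longrightarrow> Fs (comp_set \<alpha>) r m X
     = \<phi> (q ^ comp_n \<alpha> / qfact q r) * U (1 + int m - int (length \<alpha>)) (int r + int m - int (length \<alpha>))"
proof (induction r arbitrary: \<alpha> m)
  case 0
  then have "\<alpha> = []" by (rule comp_nil)
  then show ?case by (simp add: Fs_0 comp_n_def qfact_def hom1 u_interval_def)
next
  case (Suc n)
  have pos: "\<forall>x\<in>set \<alpha>. 0 < x" and sm: "sum_list \<alpha> = Suc n"
    using Suc.prems unfolding is_composition_def by auto
  then have "\<alpha> \<noteq> []" by auto
  then obtain \<beta> a where \<alpha>: "\<alpha> = \<beta> @ [a]" using rev_exhaust by blast
  have posb: "\<forall>x\<in>set \<beta>. 0 < x" and a0: "0 < a" using pos \<alpha> by auto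
  have sb: "sum_list \<beta> + a = Suc n" using sm \<alpha> by simp
  define d where "d = length \<beta>"
  have ds: "d \<le> n" using length_le_sum[OF posb] sb a0 unfolding d_def by linarith
  define e where "e = comp_n \<beta> + d * (a - 1)"
  have ce: "comp_n \<alpha> = e + d"
    unfolding \<alpha> comp_n_snoc e_def d_def using a0 by (cases a) (auto simp: algebra_simps)
  define c' where "c' = \<phi> (q ^ e / qfact q n)"
  have key: "Fs (comp_set \<alpha>) n (if n \<in> comp_set \<alpha> then p - 1 else p) X
      = c' * U (int p - int d) (int p - int d + int n - 1)" if p: "p \<in> {1..m}" for p
  proof (cases "2 \<le> a")
    case True
    have nn: "n \<notin> comp_set \<alpha>" using not_in_comp_set[OF True, of \<beta>] sb \<alpha> by simp
    have cs: "comp_set \<alpha> = comp_set (\<beta> @ [a - 1])" unfolding \<alpha> comp_set_snoc ..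
    have ic: "is_composition (\<beta> @ [a - 1]) n" unfolding is_composition_def using posb True sb by auto
    have "Fs (comp_set (\<beta> @ [a - 1])) n p X = \<phi> (q ^ comp_n (\<beta> @ [a - 1]) / qfact q n)
        * U (1 + int p - int (length (\<beta> @ [a - 1]))) (int n + int p - int (length (\<beta> @ [a - 1])))"
      by (rule Suc.IH[OF ic])
    also have "comp_n (\<beta> @ [a - 1]) = e" unfolding comp_n_snoc e_def d_def ..
    also have "U (1 + int p - int (length (\<beta> @ [a - 1]))) (int n + int p - int (length (\<beta> @ [a - 1])))
       = U (int p - int d) (int p - int d + int n - 1)" by (simp add: d_def algebra_simps)
    finally show ?thesis using nn cs c'_def by simp
  next
    case False
    then have a1: "a = 1" using a0 by simp
    have sbn: "sum_list \<beta> = n" using sb a1 by simp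
    have ee: "e = comp_n \<beta>" unfolding e_def a1 by simp
    show ?thesis
    proof (cases "\<beta> = []")
      case True
      then have "n = 0" "d = 0" "e = 0" using sbn ee d_def by (auto simp: comp_n_def)
      then show ?thesis by (simp add: Fs_0 c'_def qfact_def hom1 u_interval_def)
    next
      case False
      have nin: "n \<in> comp_set \<alpha>" using in_comp_set[OF False] sbn \<alpha> by simp
      have cong: "Fs (comp_set \<alpha>) n (p - 1) X = Fs (comp_set \<beta>) n (p - 1) X"
        by (rule Fs_cong) (use comp_set_snoc_lt sbn \<alpha> in auto)
      have ic: "is_composition \<beta> n" unfolding is_composition_def using posb sbn by auto
      have p1: "int (p - 1) = int p - 1" using p by auto
      have "Fs (comp_set \<beta>) n (p - 1) X = \<phi> (q ^ comp_n \<beta> / qfact q n)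
        * U (1 + int (p - 1) - int (length \<beta>)) (int n + int (p - 1) - int (length \<beta>))"
        by (rule Suc.IH[OF ic])
      also have "U (1 + int (p - 1) - int (length \<beta>)) (int n + int (p - 1) - int (length \<beta>))
          = U (int p - int d) (int p - int d + int n - 1)" unfolding p1 by (simp add: d_def algebra_simps)
      finally show ?thesis using nin cong c'_def ee by simp
    qed
  qed
  have "Fs (comp_set \<alpha>) (Suc n) m X
      = (\<Sum>p\<in>{1..m}. Fs (comp_set \<alpha>) n (if n \<in> comp_set \<alpha> then p - 1 else p) X * X p)"
    by (rule Fs_Suc)
  also have "\<dots> = (\<Sum>p\<in>{1..m}. c' * (U (int p - int d) (int p - int d + int n - 1) * X p))"
    by (intro sum.cong refl) (simp add: key mult.assoc)
  also have "\<dots> = c' * (\<Sum>p\<in>{1..m}. U (int p - int d) (int p - int d + int n - 1) * X p)"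
    by (simp add: sum_distrib_left)
  also have "\<dots> = c' * (\<phi> (q ^ d / (\<Sum>j<Suc n. q ^ j)) * U (int m - int d) (int m - int d + int n))"
    by (simp only: sum_lemma[OF ds])
  also have "c' * (\<phi> (q ^ d / (\<Sum>j<Suc n. q ^ j)) * U (int m - int d) (int m - int d + int n))
      = \<phi> (q ^ e / qfact q n * (q ^ d / (\<Sum>j<Suc n. q ^ j))) * U (int m - int d) (int m - int d + int n)"
    unfolding c'_def hom_mult[rule_format, of "q ^ e / qfact q n" "q ^ d / (\<Sum>j<Suc n. q ^ j)"] by (simp only: mult.assoc)
  also have "q ^ e / qfact q n * (q ^ d / (\<Sum>j<Suc n. q ^ j)) = q ^ comp_n \<alpha> / qfact q (Suc n)"
    unfolding ce qfact_Suc by (simp add: power_add)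
  also have "U (int m - int d) (int m - int d + int n)
      = U (1 + int m - int (length \<alpha>)) (int (Suc n) + int m - int (length \<alpha>))"
    unfolding \<alpha> d_def by (simp add: algebra_simps)
  finally show ?case .
qed

lemma main_final:
  assumes "is_composition \<alpha> r"
  shows "fundQSym \<alpha> m (\<lambda>j. if j = 1 then u 1 else u (int j) - u (int j - 1))
         = \<phi> (q ^ comp_n \<alpha> / qfact q r)
           * u_interval u (1 + int m - int (length \<alpha>)) (int r + int m - int (length \<alpha>))"
proof -
  have "(\<lambda>j. if j = 1 then u 1 else u (int j) - u (int j - 1)) = X" by (rule ext) (simp add: X_def)
  moreover have "sum_list \<alpha> = r" using assms unfolding is_composition_def by simp
  ultimately show ?thesis using main[OF assms] by (simp add: fund_Fs)
qed

end

theorem mainTheorem12: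
  fixes q :: "'k::field_char_0"
    and \<phi> :: "'k \<Rightarrow> 'a::comm_ring_1"
    and u :: "int \<Rightarrow> 'a"
    and \<alpha> :: "nat list" and r m :: nat
  assumes q_not_root: "\<forall>n::nat. 1 \<le> n \<and> q ^ n = 1 \<longrightarrow> q = 1"
    and hom1: "\<phi> 1 = 1"
    and hom_add: "\<forall>a b. \<phi> (a + b) = \<phi> a + \<phi> b"
    and hom_mult: "\<forall>a b. \<phi> (a * b) = \<phi> a * \<phi> b"
    and klyachko: "\<forall>i. \<phi> (q + 1) * u i ^ 2 = \<phi> q * u i * u (i - 1) + u i * u (i + 1)"
    and plus: "\<forall>i\<le>0. u i = 0"
    and comp: "is_composition \<alpha> r"
    and mk: "length \<alpha> \<le> m"
  shows "fundQSym \<alpha> m (\<lambda>j. if j = 1 then u 1 else u (int j) - u (int j - 1))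
         = \<phi> (q ^ comp_n \<alpha> / qfact q r)
           * u_interval u (1 + int m - int (length \<alpha>)) (int r + int m - int (length \<alpha>))"
proof -
  have "kly q \<phi> u" unfolding kly_def using q_not_root hom1 hom_add hom_mult klyachko plus by blast
  then show ?thesis using kly.main_final comp by blast
qed

end
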